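(* Let $(Y,\mathfrak{T},\mathcal{P})$ be a primal fuzzy topological space. Then the map $Cl^\diamond:\mathbb{I}^Y\to\mathbb{I}^Y$, $Cl^\diamond(\mu)=\mu\cup\mu^\diamond$, is a Kuratowski fuzzy closure operator, i.e. for all $\mu,\nu\in\mathbb{I}^Y$: $Cl^\diamond(0_Y)=0_Y$, $\mu\subseteq Cl^\diamond(\mu)$, $Cl^\diamond(\mu\cup\nu)=Cl^\diamond(\mu)\cup Cl^\diamond(\nu)$, and $Cl^\diamond(Cl^\diamond(\mu))=Cl^\diamond(\mu)$.
   Context: Let $Y$ be a nonempty set and $\mathbb{I}=[0,1]$. A fuzzy set in $Y$ is a map $Y\to\mathbb{I}$; $\mathbb{I}^Y$ is the set of all fuzzy sets; $0_Y,1_Y$ are the constant maps with values $0,1$; $\mu\subseteq\nu$ means $\mu(y)\le\nu(y)$ for all $y$; unions/intersections are pointwise sup/inf; $\bar\mu=1_Y-\mu$. For $\mu,\nu\in\mathbb{I}^Y$, $(\mu\oplus\nu)(y)=\min(\mu(y)+\nu(y),1)$. A fuzzy point $y_t$ ($y\in Y$, $t\in(0,1]$) is the fuzzy set with value $t$ at $y$ and $0$ elsewhere; $y_t\in\mu$ means $t\le\mu(y)$. We write $y_t\prec\mu$ if $t+\mu(y)>1$. A set $F$ of fuzzy points is identified with the fuzzy set $y\mapsto\sup\{t: y_t\in F\}$ (with $\sup\emptyset=0$). A fuzzy topology on $Y$ is a family $\mathfrak{T}\subseteq\mathbb{I}^Y$ containing $0_Y,1_Y$ and closed under finite intersections and arbitrary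 unions. For a fuzzy point $y_t$, $\mathcal{Q}(y_t)=\{\mu\in\mathfrak{T}: y_t\prec\mu\}$. A fuzzy primal on $Y$ is a family $\mathcal{P}\subseteq\mathbb{I}^Y$ such that: (i) $1_Y\notin\mathcal{P}$; (ii) if $\mu\in\mathcal{P}$ and $\nu\subseteq\mu$ then $\nu\in\mathcal{P}$; (iii) if $\mu\cap\nu\in\mathcal{P}$ then $\mu\in\mathcal{P}$ or $\nu\in\mathcal{P}$. A primal fuzzy topological space is a triple $(Y,\mathfrak{T},\mathcal{P})$ with $\mathfrak{T}$ a fuzzy topology and $\mathcal{P}$ a fuzzy primal on $Y$. For $\lambda\in\mathbb{I}^Y$, $\lambda^\diamond$ is the set of fuzzy points $y_t$ such that $\bar{\lambda}\oplus\bar{\mu}\in\mathcal{P}$ for every $\mu\in\mathcal{Q}(y_t)$. *)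

theory Defs
  imports Main "HOL.Real"
begin

text \<open>The ground set Y is the (nonempty) type 'a. Fuzzy sets are maps 'a \<Rightarrow> real with values in [0,1].\<close>

definition fuzzy_sets :: "('a \<Rightarrow> real) set" where
  "fuzzy_sets = {\<mu>. \<forall>y. 0 \<le> \<mu> y \<and> \<mu> y \<le> 1}"

definition fzero :: "'a \<Rightarrow> real" where "fzero = (\<lambda>y. 0)"
definition fone :: "'a \<Rightarrow> real" where "fone = (\<lambda>y. 1)"

definition fsubset :: "('a \<Rightarrow> real) \<Rightarrow> ('a \<Rightarrow> real) \<Rightarrow> bool" where
  "fsubset \<mu> \<nu> \<longleftrightarrow> (\<forall>y. \<mu> y \<le> \<nu> y)"

definition funion :: "('a \<Rightarrow> real) \<Rightarrow> ('a \<Rightarrow> real) \<Rightarrow> ('a \<Rightarrow> real)" where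
  "funion \<mu> \<nu> = (\<lambda>y. max (\<mu> y) (\<nu> y))"

definition finter :: "('a \<Rightarrow> real) \<Rightarrow> ('a \<Rightarrow> real) \<Rightarrow> ('a \<Rightarrow> real)" where
  "finter \<mu> \<nu> = (\<lambda>y. min (\<mu> y) (\<nu> y))"

definition rsup :: "real set \<Rightarrow> real" where
  "rsup S = (if S = {} then 0 else Sup S)"

definition fUnion :: "('a \<Rightarrow> real) set \<Rightarrow> ('a \<Rightarrow> real)" where
  "fUnion F = (\<lambda>y. rsup ((\<lambda>\<mu>. \<mu> y) ` F))"

definition fcompl :: "('a \<Rightarrow> real) \<Rightarrow> ('a \<Rightarrow> real)" where
  "fcompl \<mu> = (\<lambda>y. 1 - \<mu> y)"

definition foplus :: "('a \<Rightarrow> real) \<Rightarrow> ('a \<Rightarrow> real) \<Rightarrow> ('a \<Rightarrow> real)" where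
  "foplus \<mu> \<nu> = (\<lambda>y. min (\<mu> y + \<nu> y) 1)"

definition fuzzy_topology :: "('a \<Rightarrow> real) set \<Rightarrow> bool" where
  "fuzzy_topology T \<longleftrightarrow>
     T \<subseteq> fuzzy_sets \<and> fzero \<in> T \<and> fone \<in> T \<and>
     (\<forall>\<mu>\<in>T. \<forall>\<nu>\<in>T. finter \<mu> \<nu> \<in> T) \<and>
     (\<forall>F. F \<subseteq> T \<longrightarrow> fUnion F \<in> T)"

definition fuzzy_primal :: "('a \<Rightarrow> real) set \<Rightarrow> bool" where
  "fuzzy_primal P \<longleftrightarrow>
     P \<subseteq> fuzzy_sets \<and> fone \<notin> P \<and>
     (\<forall>\<mu>\<in>P. \<forall>\<nu>\<in>fuzzy_sets. fsubset \<nu> \<mu> \<longrightarrow> \<nu> \<in> P) \<and>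
     (\<forall>\<mu>\<in>fuzzy_sets. \<forall>\<nu>\<in>fuzzy_sets. finter \<mu> \<nu> \<in> P \<longrightarrow> \<mu> \<in> P \<or> \<nu> \<in> P)"

text \<open>Q-neighbourhoods of the fuzzy point y_t: open sets \<mu> with y_t quasi-coincident with \<mu>.\<close>
definition Qnbhd :: "('a \<Rightarrow> real) set \<Rightarrow> 'a \<Rightarrow> real \<Rightarrow> ('a \<Rightarrow> real) set" where
  "Qnbhd T y t = {\<mu> \<in> T. t + \<mu> y > 1}"

text \<open>\<lambda>^\<diamond>, as a fuzzy set: y \<mapsto> sup of the t in (0,1] with y_t in the set of fuzzy points.\<close>
definition fdiamond :: "('a \<Rightarrow> real) set \<Rightarrow> ('a \<Rightarrow> real) set \<Rightarrow> ('a \<Rightarrow> real) \<Rightarrow> ('a \<Rightarrow> real)" where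
  "fdiamond T P lam = (\<lambda>y. rsup {t. 0 < t \<and> t \<le> 1 \<and>
       (\<forall>\<mu>\<in>Qnbhd T y t. foplus (fcompl lam) (fcompl \<mu>) \<in> P)})"

definition Cl_diamond :: "('a \<Rightarrow> real) set \<Rightarrow> ('a \<Rightarrow> real) set \<Rightarrow> ('a \<Rightarrow> real) \<Rightarrow> ('a \<Rightarrow> real)" where
  "Cl_diamond T P \<mu> = funion \<mu> (fdiamond T P \<mu>)"

end

theory Submission
  imports Defs
begin

definition SS :: "('a \<Rightarrow> real) set \<Rightarrow> ('a \<Rightarrow> real) set \<Rightarrow> ('a \<Rightarrow> real) \<Rightarrow> 'a \<Rightarrow> real set" where
  "SS T P lam y = {t. 0 < t \<and> t \<le> 1 \<and> (\<forall>\<mu>\<in>Qnbhd T y t. foplus (fcompl lam) (fcompl \<mu>) \<in> P)}"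

lemma fd_SS: "fdiamond T P lam y = rsup (SS T P lam y)"
  by (simp add: fdiamond_def SS_def)

lemma SS_sub: "SS T P lam y \<subseteq> {0<..1}"
  by (auto simp: SS_def)

lemma rsup_bounds: assumes "S \<subseteq> {0<..(1::real)}" shows "0 \<le> rsup S \<and> rsup S \<le> 1"
proof (cases "S = {}")
  case True then show ?thesis by (simp add: rsup_def)
next
  case False
  then obtain x where x: "x \<in> S" by auto
  have bdd: "bdd_above S" using assms by (intro bdd_aboveI[of _ 1]) auto
  have "x \<le> Sup S" using cSup_upper[OF x bdd] .
  moreover have "Sup S \<le> 1" using assms False by (intro cSup_least) auto
  moreover have "0 < x" using x assms by auto
  ultimately show ?thesis using False by (simp add: rsup_def)
qed

lemma rsup_upper: assumes "S \<subseteq> {0<..(1::real)}" "t \<in> S" shows "t \<le> rsup S"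
proof -
  have bdd: "bdd_above S" using assms by (intro bdd_aboveI[of _ 1]) auto
  show ?thesis using cSup_upper[OF assms(2) bdd] assms(2) by (auto simp: rsup_def)
qed

lemma rsup_union: assumes "A \<subseteq> {0<..(1::real)}" "B \<subseteq> {0<..(1::real)}"
  shows "rsup (A \<union> B) = max (rsup A) (rsup B)"
proof -
  have bA: "bdd_above A" using assms by (intro bdd_aboveI[of _ 1]) auto
  have bB: "bdd_above B" using assms by (intro bdd_aboveI[of _ 1]) auto
  have pA: "0 \<le> rsup A" and pB: "0 \<le> rsup B" using rsup_bounds assms by blast+
  show ?thesis
  proof (cases "A = {}")
    case True then show ?thesis using pB by (simp add: rsup_def)
  next
    case nA: False
    show ?thesis
    proof (cases "B = {}")
      case True then show ?thesis using pA by (simp add: rsup_def)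
    next
      case False
      then show ?thesis using nA cSup_union_distrib[OF nA bA False bB]
        by (simp add: rsup_def sup_max)
    qed
  qed
qed

lemma fd_fs: "fdiamond T P lam \<in> fuzzy_sets"
  by (simp add: fuzzy_sets_def fd_SS rsup_bounds[OF SS_sub])

lemma T_fs: "fuzzy_topology T \<Longrightarrow> W \<in> T \<Longrightarrow> W \<in> fuzzy_sets"
  by (auto simp: fuzzy_topology_def)

lemma fone_Q: "fuzzy_topology T \<Longrightarrow> 0 < t \<Longrightarrow> fone \<in> Qnbhd T y t"
  by (auto simp: fuzzy_topology_def Qnbhd_def fone_def)

lemma foplus_fs: assumes "a \<in> fuzzy_sets" "b \<in> fuzzy_sets" shows "foplus (fcompl a) (fcompl b) \<in> fuzzy_sets"
proof -
  have "\<And>y. a y \<le> 1" "\<And>y. b y \<le> 1" using assms by (auto simp: fuzzy_sets_def)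
  then have "\<And>y. 0 \<le> (1 - a y) + (1 - b y)" by (metis add_nonneg_nonneg diff_ge_0_iff_ge)
  then show ?thesis unfolding fuzzy_sets_def foplus_def fcompl_def by simp
qed

lemma fd_zero: assumes "fuzzy_topology T" "fuzzy_primal P"
  shows "fdiamond T P fzero = fzero"
proof -
  have "SS T P fzero y = {}" for y
  proof (rule ccontr)
    assume "SS T P fzero y \<noteq> {}"
    then obtain t where t: "t \<in> SS T P fzero y" by auto
    then have "0 < t" by (auto simp: SS_def)
    then have "foplus (fcompl fzero) (fcompl fone) \<in> P" using t fone_Q[OF assms(1)]
      by (auto simp: SS_def)
    moreover have "foplus (fcompl fzero) (fcompl (fone::'a\<Rightarrow>real)) = fone"
      by (simp add: foplus_def fcompl_def fzero_def fone_def)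
    ultimately show False using assms(2) by (simp add: fuzzy_primal_def)
  qed
  then show ?thesis by (simp add: fun_eq_iff fd_SS rsup_def fzero_def)
qed

lemma SS_union: assumes T: "fuzzy_topology T" and P: "fuzzy_primal P"
  and l1: "l1 \<in> fuzzy_sets" and l2: "l2 \<in> fuzzy_sets"
  shows "SS T P (funion l1 l2) y = SS T P l1 y \<union> SS T P l2 y"
proof
  show "SS T P l1 y \<union> SS T P l2 y \<subseteq> SS T P (funion l1 l2) y"
  proof
    fix t assume "t \<in> SS T P l1 y \<union> SS T P l2 y"
    then show "t \<in> SS T P (funion l1 l2) y"
    proof
      assume t: "t \<in> SS T P l1 y"
      { fix W assume W: "W \<in> Qnbhd T y t"
        then have "foplus (fcompl l1) (fcompl W) \<in> P" using t by (auto simp: SS_def)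
        moreover have "W \<in> fuzzy_sets" using W T_fs[OF T] by (auto simp: Qnbhd_def)
        moreover have "fsubset (foplus (fcompl (funion l1 l2)) (fcompl W)) (foplus (fcompl l1) (fcompl W))"
          by (auto simp: fsubset_def foplus_def fcompl_def funion_def)
        ultimately have "foplus (fcompl (funion l1 l2)) (fcompl W) \<in> P"
          using P l1 l2 foplus_fs[of "funion l1 l2" W]
          by (auto simp: fuzzy_primal_def funion_def fuzzy_sets_def max_def) }
      then show ?thesis using t by (auto simp: SS_def)
    next
      assume t: "t \<in> SS T P l2 y"
      { fix W assume W: "W \<in> Qnbhd T y t"
        then have "foplus (fcompl l2) (fcompl W) \<in> P" using t by (auto simp: SS_def)
        moreover have "W \<in> fuzzy_sets" using W T_fs[OF T] by (auto simp: Qnbhd_def)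
        moreover have "fsubset (foplus (fcompl (funion l1 l2)) (fcompl W)) (foplus (fcompl l2) (fcompl W))"
          by (auto simp: fsubset_def foplus_def fcompl_def funion_def)
        ultimately have "foplus (fcompl (funion l1 l2)) (fcompl W) \<in> P"
          using P l1 l2 foplus_fs[of "funion l1 l2" W]
          by (auto simp: fuzzy_primal_def funion_def fuzzy_sets_def max_def) }
      then show ?thesis using t by (auto simp: SS_def)
    qed
  qed
next
  show "SS T P (funion l1 l2) y \<subseteq> SS T P l1 y \<union> SS T P l2 y"
  proof
    fix t assume t: "t \<in> SS T P (funion l1 l2) y"
    show "t \<in> SS T P l1 y \<union> SS T P l2 y"
    proof (rule ccontr)
      assume "\<not> ?thesis"
      then obtain W1 W2 where W1: "W1 \<in> Qnbhd T y t" "foplus (fcompl l1) (fcompl W1) \<notin> P"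
        and W2: "W2 \<in> Qnbhd T y t" "foplus (fcompl l2) (fcompl W2) \<notin> P"
        using t by (auto simp: SS_def)
      define W where "W = finter W1 W2"
      have WT: "W \<in> T" using W1 W2 T by (auto simp: W_def Qnbhd_def fuzzy_topology_def)
      have WQ: "W \<in> Qnbhd T y t" using W1 W2 WT by (auto simp: W_def Qnbhd_def finter_def)
      have Wf: "W \<in> fuzzy_sets" using WT T_fs[OF T] by auto
      have W1f: "W1 \<in> fuzzy_sets" using W1 T_fs[OF T] by (auto simp: Qnbhd_def)
      have W2f: "W2 \<in> fuzzy_sets" using W2 T_fs[OF T] by (auto simp: Qnbhd_def)
      have eq: "foplus (fcompl (funion l1 l2)) (fcompl W) =
          finter (foplus (fcompl l1) (fcompl W)) (foplus (fcompl l2) (fcompl W))"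
        by (auto simp: fun_eq_iff foplus_def fcompl_def funion_def finter_def min_def max_def)
      have "foplus (fcompl (funion l1 l2)) (fcompl W) \<in> P" using t WQ by (auto simp: SS_def)
      then have "foplus (fcompl l1) (fcompl W) \<in> P \<or> foplus (fcompl l2) (fcompl W) \<in> P"
        using P eq foplus_fs[OF l1 Wf] foplus_fs[OF l2 Wf] by (auto simp: fuzzy_primal_def)
      moreover have "fsubset (foplus (fcompl l1) (fcompl W1)) (foplus (fcompl l1) (fcompl W))"
        by (auto simp: fsubset_def foplus_def fcompl_def W_def finter_def)
      moreover have "fsubset (foplus (fcompl l2) (fcompl W2)) (foplus (fcompl l2) (fcompl W))"
        by (auto simp: fsubset_def foplus_def fcompl_def W_def finter_def)
      ultimately show False using P W1 W2 foplus_fs[OF l1 W1f] foplus_fs[OF l2 W2f]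
        by (auto simp: fuzzy_primal_def)
    qed
  qed
qed

lemma fd_union: assumes "fuzzy_topology T" "fuzzy_primal P" "l1 \<in> fuzzy_sets" "l2 \<in> fuzzy_sets"
  shows "fdiamond T P (funion l1 l2) = funion (fdiamond T P l1) (fdiamond T P l2)"
  by (simp add: fun_eq_iff fd_SS funion_def[of "fdiamond T P l1"] SS_union[OF assms] rsup_union[OF SS_sub SS_sub])

lemma fd_fd: assumes T: "fuzzy_topology T" and P: "fuzzy_primal P"
  shows "fdiamond T P (fdiamond T P lam) y \<le> fdiamond T P lam y"
proof -
  let ?D = "fdiamond T P lam"
  have "t \<le> ?D y" if t: "t \<in> SS T P ?D y" for t
  proof (rule ccontr)
    assume "\<not> t \<le> ?D y"
    then have lt: "?D y < t" by simp
    define t' where "t' = (?D y + t) / 2"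
    have D0: "0 \<le> ?D y" using fd_fs[of T P lam] by (auto simp: fuzzy_sets_def)
    have t1: "t \<le> 1" using t by (auto simp: SS_def)
    have "t' \<notin> SS T P lam y"
    proof
      assume "t' \<in> SS T P lam y"
      then have "t' \<le> ?D y" using rsup_upper[OF SS_sub] fd_SS by metis
      then show False using lt by (simp add: t'_def)
    qed
    moreover have "0 < t'" "t' \<le> 1" using lt D0 t1 by (auto simp: t'_def)
    ultimately obtain W where W: "W \<in> Qnbhd T y t'" and nP: "foplus (fcompl lam) (fcompl W) \<notin> P"
      by (auto simp: SS_def)
    have "t' < t" using lt by (simp add: t'_def)
    then have "W \<in> Qnbhd T y t" using W by (auto simp: Qnbhd_def)
    then have inP: "foplus (fcompl ?D) (fcompl W) \<in> P" using t by (auto simp: SS_def)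
    have "?D z + W z \<le> 1" for z
    proof (rule ccontr)
      assume "\<not> ?D z + W z \<le> 1"
      then have gt: "1 - W z < rsup (SS T P lam z)" by (simp add: fd_SS)
      have "W \<in> T" using W by (simp add: Qnbhd_def)
      then have "W z \<le> 1" using T_fs[OF T] by (auto simp: fuzzy_sets_def)
      then have ne: "SS T P lam z \<noteq> {}" using gt
        by (auto simp: rsup_def)
      have bdd: "bdd_above (SS T P lam z)" using SS_sub by (intro bdd_aboveI[of _ 1]) fastforce
      obtain s where s: "s \<in> SS T P lam z" "1 - W z < s"
        using less_cSup_iff[OF ne bdd] gt ne by (auto simp: rsup_def)
      have "W \<in> Qnbhd T z s" using W s by (auto simp: Qnbhd_def)
      then have "foplus (fcompl lam) (fcompl W) \<in> P" using s by (auto simp: SS_def)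
      then show False using nP by simp
    qed
    then have "foplus (fcompl ?D) (fcompl W) = fone"
      unfolding fun_eq_iff foplus_def fcompl_def fone_def by (metis add.commute add_diff_eq diff_add_cancel diff_diff_eq2 le_diff_eq min.absorb2 add_le_cancel_left)
    then show False using inP P by (simp add: fuzzy_primal_def)
  qed
  moreover have "0 \<le> ?D y" using fd_fs[of T P lam] by (auto simp: fuzzy_sets_def)
  ultimately show ?thesis
    by (cases "SS T P ?D y = {}") (auto simp: fd_SS[of T P ?D] rsup_def intro!: cSup_least)
qed

theorem theorem4p5:
  fixes T P :: "('a \<Rightarrow> real) set"
  assumes "fuzzy_topology T" and "fuzzy_primal P"
  shows "(\<forall>\<mu>\<in>fuzzy_sets. Cl_diamond T P \<mu> \<in> fuzzy_sets) \<and>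
         Cl_diamond T P fzero = fzero \<and>
         (\<forall>\<mu>\<in>fuzzy_sets. fsubset \<mu> (Cl_diamond T P \<mu>)) \<and>
         (\<forall>\<mu>\<in>fuzzy_sets. \<forall>\<nu>\<in>fuzzy_sets.
            Cl_diamond T P (funion \<mu> \<nu>) = funion (Cl_diamond T P \<mu>) (Cl_diamond T P \<nu>)) \<and>
         (\<forall>\<mu>\<in>fuzzy_sets. Cl_diamond T P (Cl_diamond T P \<mu>) = Cl_diamond T P \<mu>)"
proof (intro conjI ballI)
  fix \<mu> :: "'a \<Rightarrow> real" assume m: "\<mu> \<in> fuzzy_sets"
  show "Cl_diamond T P \<mu> \<in> fuzzy_sets"
    using m fd_fs[of T P \<mu>] by (auto simp: Cl_diamond_def fuzzy_sets_def funion_def le_max_iff_disj)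
  show "fsubset \<mu> (Cl_diamond T P \<mu>)" by (simp add: fsubset_def Cl_diamond_def funion_def)
  fix \<nu> :: "'a \<Rightarrow> real" assume n: "\<nu> \<in> fuzzy_sets"
  show "Cl_diamond T P (funion \<mu> \<nu>) = funion (Cl_diamond T P \<mu>) (Cl_diamond T P \<nu>)"
    using fd_union[OF assms m n]
    by (auto simp: fun_eq_iff Cl_diamond_def funion_def max_def)
next
  show "Cl_diamond T P fzero = fzero" using fd_zero[OF assms]
    by (simp add: fun_eq_iff Cl_diamond_def funion_def fzero_def)
next
  fix \<mu> :: "'a \<Rightarrow> real" assume m: "\<mu> \<in> fuzzy_sets"
  have eq: "fdiamond T P (Cl_diamond T P \<mu>) = funion (fdiamond T P \<mu>) (fdiamond T P (fdiamond T P \<mu>))"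
    unfolding Cl_diamond_def by (rule fd_union[OF assms m fd_fs])
  show "Cl_diamond T P (Cl_diamond T P \<mu>) = Cl_diamond T P \<mu>"
    using fd_fd[OF assms, of \<mu>]
    by (auto simp: fun_eq_iff eq Cl_diamond_def[of T P "Cl_diamond T P \<mu>"] funion_def,
        auto simp: Cl_diamond_def funion_def max_def)
qed

end
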